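(* The graphs $W^{k-1}_{k-i+1}= W(k-1,k-2,\dots,k-i+1)$ satisfy: (1) $W^{k-1}_{k-i+1}$ can be properly $(k-1)$-colored so that at most $i$ different colors appear at active vertices and so that among active vertices, only one vertex of our choosing gets the $i$th color. (2) In any $(k-1)$-coloring of $W^{k-1}_{k-i+1}$, at least $i$ different colors occur as the colors of active vertices. (3) If any edge from $W^{k-1}_{k-i+1}$ is removed, it can be properly $(k-1)$-colored so that at most $i-1$ colors occur at active vertices.
   Context: Fix $k\geq 4$ and a $(k-1)$-critical graph $M_{k-1}$ containing no triangles and no pentagons. Form $\bar M_{k-1}$ by adding, for each vertex $v$ of $M_{k-1}$, a new vertex $\bar v$ joined to every vertex of the neighborhood $\Gamma(v)\subseteq M_{k-1}$; the edges of $M_{k-1}$ are Type 1 edges, the newly added edges are Type 2 edges, and the new vertices $\bar v$ are the forward vertices (they form an independent set). For $2\leq r\leq k-1$, the graph $M^r_{k-1}\subseteq \bar M_{k-1}$ is obtained by removing Type 2 edges one by one (discarding any forward vertices isolated by this process) until no further Type 2 edge can be removed without the result admitting a $(k-1)$-coloring in which only $r-1$ colors appear at forward vertices. Denote by $F(M)$ the set of forward vertices of such a graph $M$. Given $r_1,\dots,r_t$, the graph $W(r_1,\dots,r_t)$ is the disjoint union of graphs $M^{r_i}_{k-1}$, $1\leq i\leq t$, together with an independent "active set" $A=\prod_i F(M^{r_i}_{k-1})$, where for each $i$ every forward vertex $\bar v\in F(M^{r_i}_{k-1})$ is joined to all vertices $u\in A$ whose $i$th coordinate equals $\bar v$. Set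 $W^{k-1}_{k-i+1}= W(k-1,k-2,\dots,k-i+1)$ (for $i=1$ this is interpreted as a single active vertex). *)

theory Defs
  imports Main
begin

definition graph :: "'v set \<Rightarrow> 'v set set \<Rightarrow> bool" where
  "graph V E \<longleftrightarrow> finite V \<and> (\<forall>e\<in>E. e \<subseteq> V \<and> card e = 2)"

definition proper_col :: "'v set \<Rightarrow> 'v set set \<Rightarrow> nat \<Rightarrow> ('v \<Rightarrow> nat) \<Rightarrow> bool" where
  "proper_col V E n c \<longleftrightarrow> (\<forall>v\<in>V. c v < n) \<and> (\<forall>u v. {u, v} \<in> E \<longrightarrow> c u \<noteq> c v)"

definition colorable :: "'v set \<Rightarrow> 'v set set \<Rightarrow> nat \<Rightarrow> bool" where
  "colorable V E n \<longleftrightarrow> (\<exists>c. proper_col V E n c)"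

definition critical :: "'v set \<Rightarrow> 'v set set \<Rightarrow> nat \<Rightarrow> bool" where
  "critical V E n \<longleftrightarrow> graph V E \<and> colorable V E n \<and> \<not> colorable V E (n - 1) \<and>
     (\<forall>V' E'. V' \<subseteq> V \<and> E' \<subseteq> E \<and> (\<forall>e\<in>E'. e \<subseteq> V') \<and> (V', E') \<noteq> (V, E)
        \<longrightarrow> colorable V' E' (n - 1))"

definition triangle_free :: "'v set set \<Rightarrow> bool" where
  "triangle_free E \<longleftrightarrow> \<not> (\<exists>a b c. {a, b} \<in> E \<and> {b, c} \<in> E \<and> {a, c} \<in> E)"

definition pentagon_free :: "'v set set \<Rightarrow> bool" where
  "pentagon_free E \<longleftrightarrow> \<not> (\<exists>a b c d e. distinct [a, b, c, d, e] \<and>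
     {a, b} \<in> E \<and> {b, c} \<in> E \<and> {c, d} \<in> E \<and> {d, e} \<in> E \<and> {e, a} \<in> E)"

text \<open>Vertices of \<open>\<bar>M\<close>: Inl v (original vertex v), Inr v (forward vertex \<open>\<bar>v\<close>).\<close>

definition type1_edges :: "'a set set \<Rightarrow> ('a + 'a) set set" where
  "type1_edges E = (\<lambda>e. Inl ` e) ` E"

definition type2_edges :: "'a set \<Rightarrow> 'a set set \<Rightarrow> ('a + 'a) set set" where
  "type2_edges V E = {{Inr v, Inl u} | u v. v \<in> V \<and> {u, v} \<in> E}"

text \<open>Subgraph of \<open>\<bar>M\<close> keeping all Type 1 edges and the Type 2 edges in S;
  forward vertices isolated by the removal are discarded.\<close>
definition fwd :: "('a + 'a) set set \<Rightarrow> 'a set" where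
  "fwd S = {v. \<exists>u. {Inr v, Inl u} \<in> S}"

definition sub_verts :: "'a set \<Rightarrow> ('a + 'a) set set \<Rightarrow> ('a + 'a) set" where
  "sub_verts V S = Inl ` V \<union> Inr ` fwd S"

definition sub_edges :: "'a set set \<Rightarrow> ('a + 'a) set set \<Rightarrow> ('a + 'a) set set" where
  "sub_edges E S = type1_edges E \<union> S"

definition admits :: "'a set \<Rightarrow> 'a set set \<Rightarrow> nat \<Rightarrow> nat \<Rightarrow> ('a + 'a) set set \<Rightarrow> bool" where
  "admits V E n r S \<longleftrightarrow> (\<exists>c. proper_col (sub_verts V S) (sub_edges E S) n c \<and>
      card (c ` Inr ` fwd S) \<le> r - 1)"

definition removal_step :: "'a set \<Rightarrow> 'a set set \<Rightarrow> nat \<Rightarrow> nat \<Rightarrow>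
     ('a + 'a) set set \<Rightarrow> ('a + 'a) set set \<Rightarrow> bool" where
  "removal_step V E n r S S' \<longleftrightarrow> (\<exists>e\<in>S. S' = S - {e} \<and> \<not> admits V E n r S')"

text \<open>S is (the Type 2 edge set of) a possible outcome \<open>M^r_n\<close> of the process (with n = k-1).\<close>
definition is_Mr :: "'a set \<Rightarrow> 'a set set \<Rightarrow> nat \<Rightarrow> nat \<Rightarrow> ('a + 'a) set set \<Rightarrow> bool" where
  "is_Mr V E n r S \<longleftrightarrow> (removal_step V E n r)\<^sup>*\<^sup>* (type2_edges V E) S \<and>
     (\<forall>e\<in>S. admits V E n r (S - {e}))"

text \<open>Component j (j < t) is the subgraph given by Ss j. Active vertices are lists xs of
  length t with xs!j a forward vertex of component j.\<close>
definition active :: "nat \<Rightarrow> (nat \<Rightarrow> ('a + 'a) set set) \<Rightarrow> 'a list set" where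
  "active t Ss = {xs. length xs = t \<and> (\<forall>j<t. xs ! j \<in> fwd (Ss j))}"

definition W_verts :: "'a set \<Rightarrow> nat \<Rightarrow> (nat \<Rightarrow> ('a + 'a) set set)
     \<Rightarrow> ((nat \<times> ('a + 'a)) + 'a list) set" where
  "W_verts V t Ss = {Inl (j, x) | j x. j < t \<and> x \<in> sub_verts V (Ss j)} \<union> Inr ` active t Ss"

definition W_edges :: "'a set set \<Rightarrow> nat \<Rightarrow> (nat \<Rightarrow> ('a + 'a) set set)
     \<Rightarrow> ((nat \<times> ('a + 'a)) + 'a list) set set" where
  "W_edges E t Ss = {(\<lambda>x. Inl (j, x)) ` e | j e. j < t \<and> e \<in> sub_edges E (Ss j)} \<union>
     {{Inl (j, Inr (xs ! j)), Inr xs} | j xs. j < t \<and> xs \<in> active t Ss}"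

end

theory Submission
  imports Defs
begin

lemma type2_mem: "p \<in> type2_edges V E \<longleftrightarrow> (\<exists>u v. v \<in> V \<and> {u,v} \<in> E \<and> p = {Inr v, Inl u})"
  by (auto simp: type2_edges_def)

lemma type1_mem: "p \<in> type1_edges E \<longleftrightarrow> (\<exists>e\<in>E. p = Inl ` e)"
  by (auto simp: type1_edges_def)

lemma reach_sub:
  assumes "(removal_step V E n r)\<^sup>*\<^sup>* (type2_edges V E) S"
  shows "S \<subseteq> type2_edges V E"
  using assms
proof (induction rule: rtranclp_induct)
  case base then show ?case by simp
next
  case (step y z) then show ?case by (auto simp: removal_step_def)
qed

lemma reach_not_admits:
  assumes "(removal_step V E n r)\<^sup>*\<^sup>* (type2_edges V E) S"
    and "\<not> admits V E n r (type2_edges V E)"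
  shows "\<not> admits V E n r S"
  using assms
proof (induction rule: rtranclp_induct)
  case base then show ?case by simp
next
  case (step y z) then show ?case by (auto simp: removal_step_def)
qed

lemma fwd_in_V: "S \<subseteq> type2_edges V E \<Longrightarrow> fwd S \<subseteq> V"
  by (auto simp: fwd_def type2_edges_def doubleton_eq_iff)

lemma fwd_mono: "S' \<subseteq> S \<Longrightarrow> fwd S' \<subseteq> fwd S"
  by (auto simp: fwd_def)

lemma type2_nbr: "{Inr v, Inl u} \<in> type2_edges V E \<Longrightarrow> v \<in> V \<and> {u, v} \<in> E"
  by (auto simp: type2_edges_def doubleton_eq_iff)

lemma admits_mono:
  assumes "admits V E n r S" "S' \<subseteq> S"
  shows "admits V E n r S'"
proof -
  obtain c where c: "proper_col (sub_verts V S) (sub_edges E S) n c"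
    "card (c ` Inr ` fwd S) \<le> r - 1" using assms(1) by (auto simp: admits_def)
  have fm: "fwd S' \<subseteq> fwd S" using assms(2) by (rule fwd_mono)
  have "proper_col (sub_verts V S') (sub_edges E S') n c"
    using c(1) fm assms(2) by (auto simp: proper_col_def sub_verts_def sub_edges_def)
  moreover have "finite (c ` Inr ` fwd S)"
  proof (rule finite_subset)
    show "c ` Inr ` fwd S \<subseteq> {..<n}" using c(1) by (auto simp: proper_col_def sub_verts_def)
  qed simp
  then have "card (c ` Inr ` fwd S') \<le> card (c ` Inr ` fwd S)"
    using fm by (intro card_mono) auto
  ultimately show ?thesis using c(2) by (auto simp: admits_def)
qed

lemma crit_edge:
  assumes "critical V E n" "e \<in> E"
  shows "colorable V (E - {e}) (n - 1)"
proof -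
  have g: "graph V E" using assms(1) by (simp add: critical_def)
  have "(V, E - {e}) \<noteq> (V, E)" using assms(2) by auto
  moreover have "\<forall>e'\<in>E - {e}. e' \<subseteq> V" using g by (auto simp: graph_def)
  ultimately show ?thesis using assms(1) unfolding critical_def by blast
qed

lemma graph_edge: "graph V E \<Longrightarrow> {u, w} \<in> E \<Longrightarrow> u \<in> V \<and> w \<in> V \<and> u \<noteq> w"
  by (cases "u = w") (auto simp: graph_def)

lemma proper_colD1: "proper_col V E n c \<Longrightarrow> v \<in> V \<Longrightarrow> c v < n"
  unfolding proper_col_def by blast

lemma proper_colD2: "proper_col V E n c \<Longrightarrow> {u, v} \<in> E \<Longrightarrow> c u \<noteq> c v"
  unfolding proper_col_def by blast

lemma Inl_type1: "{u, w} \<in> E \<Longrightarrow> {Inl u, Inl w} \<in> type1_edges E"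
proof -
  assume "{u, w} \<in> E"
  then have "Inl ` {u, w} \<in> type1_edges E" unfolding type1_edges_def by (rule imageI[where f="\<lambda>e. Inl ` e"])
  then show ?thesis by simp
qed

lemma full_not_admits:
  assumes crit: "critical V E n" and rn: "r \<le> n" and n3: "n \<ge> 3"
  shows "\<not> admits V E n r (type2_edges V E)"
proof
  assume "admits V E n r (type2_edges V E)"
  then obtain c where c: "proper_col (sub_verts V (type2_edges V E)) (sub_edges E (type2_edges V E)) n c"
    and cardF: "card (c ` Inr ` fwd (type2_edges V E)) \<le> r - 1" by (auto simp: admits_def)
  define T where "T = type2_edges V E"
  define F where "F = c ` Inr ` fwd T"
  have g: "graph V E" using crit by (simp add: critical_def)
  have Fsub: "F \<subseteq> {..<n}" using c by (auto simp: proper_col_def sub_verts_def F_def T_def)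
  have "card F < card {..<n::nat}" using cardF rn n3 by (simp add: F_def T_def)
  then obtain \<delta> where d: "\<delta> < n" "\<delta> \<notin> F"
    by (metis Fsub card_mono finite_lessThan lessThan_iff not_le subsetI subset_antisym)
  have cl: "\<And>w. w \<in> V \<Longrightarrow> c (Inl w) < n" using c by (auto simp: proper_col_def sub_verts_def T_def)
  have t1: "\<And>u w. {u, w} \<in> E \<Longrightarrow> c (Inl u) \<noteq> c (Inl w)"
  proof -
    fix u w assume "{u, w} \<in> E"
    then have "{Inl u, Inl w} \<in> sub_edges E T" by (simp add: sub_edges_def Inl_type1)
    then show "c (Inl u) \<noteq> c (Inl w)" by (rule proper_colD2[OF c[folded T_def]])
  qed
  have t2: "\<And>u w. {u, w} \<in> E \<Longrightarrow> c (Inr w) \<noteq> c (Inl u) \<and> c (Inr w) < n \<and> c (Inr w) \<in> F"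
  proof -
    fix u w assume e: "{u, w} \<in> E"
    then have wV: "w \<in> V" using graph_edge[OF g e] by auto
    then have m: "{Inr w, Inl u} \<in> T" using e by (auto simp: T_def type2_edges_def)
    then have "{Inr w, Inl u} \<in> sub_edges E T" by (simp add: sub_edges_def)
    moreover have wf: "w \<in> fwd T" using m by (auto simp: fwd_def)
    moreover have "Inr w \<in> sub_verts V T" using wf by (simp add: sub_verts_def)
    ultimately show "c (Inr w) \<noteq> c (Inl u) \<and> c (Inr w) < n \<and> c (Inr w) \<in> F"
      using c proper_colD1[OF c[folded T_def]] proper_colD2[OF c[folded T_def]] by (auto simp: F_def)
  qed
  define D where "D w = (if c (Inl w) = \<delta> then c (Inr w) else c (Inl w))" for w
  define gg where "gg x = (if x < \<delta> then x else x - 1)" for x :: nat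
  define dd where "dd w = (if gg (D w) < n - 1 then gg (D w) else 0)" for w
  have Dgood: "D w < n \<and> D w \<noteq> \<delta>" if "{u, w} \<in> E" for u w
    using t2[OF that] cl graph_edge[OF g that] d by (auto simp: D_def)
  have gg_lt: "x < n \<Longrightarrow> x \<noteq> \<delta> \<Longrightarrow> gg x < n - 1" for x using d by (auto simp: gg_def)
  have gg_inj: "x \<noteq> y \<Longrightarrow> x \<noteq> \<delta> \<Longrightarrow> y \<noteq> \<delta> \<Longrightarrow> gg x \<noteq> gg y" for x y
    by (auto simp: gg_def)
  have "proper_col V E (n - 1) dd"
    unfolding proper_col_def
  proof (intro conjI allI impI ballI)
    fix w assume "w \<in> V" then show "dd w < n - 1" using n3 by (auto simp: dd_def)
  next
    fix u w assume e: "{u, w} \<in> E"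
    have e': "{w, u} \<in> E" using e by (simp add: insert_commute)
    have "D u \<noteq> D w"
    proof (cases "c (Inl u) = \<delta>")
      case True
      then have "c (Inl w) \<noteq> \<delta>" using t1[OF e] by auto
      then show ?thesis using True t2[OF e'] by (auto simp: D_def)
    next
      case False
      show ?thesis
      proof (cases "c (Inl w) = \<delta>")
        case True then show ?thesis using False t2[OF e] by (auto simp: D_def)
      next
        case False2: False then show ?thesis using False t1[OF e] by (auto simp: D_def)
      qed
    qed
    then show "dd u \<noteq> dd w" using Dgood[OF e] Dgood[OF e'] gg_lt gg_inj by (auto simp: dd_def)
  qed
  then have "colorable V E (n - 1)" by (auto simp: colorable_def)
  then show False using crit by (simp add: critical_def)
qed

lemma Mr_sub: "is_Mr V E n r S \<Longrightarrow> S \<subseteq> type2_edges V E"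
proof -
  assume "is_Mr V E n r S"
  then have "(removal_step V E n r)\<^sup>*\<^sup>* (type2_edges V E) S" by (simp add: is_Mr_def)
  then show ?thesis by (rule reach_sub)
qed

lemma Mr_not_admits:
  assumes "critical V E n" "n \<ge> 3" "r \<le> n" "is_Mr V E n r S"
  shows "\<not> admits V E n r S"
proof -
  have "(removal_step V E n r)\<^sup>*\<^sup>* (type2_edges V E) S" using assms(4) by (simp add: is_Mr_def)
  then show ?thesis by (rule reach_not_admits) (rule full_not_admits[OF assms(1) assms(3) assms(2)])
qed

lemma sub_edges_cases:
  assumes g: "graph V E" and S: "S \<subseteq> type2_edges V E" and pq: "{p, q} \<in> sub_edges E S"
  shows "(\<exists>a b. {a, b} \<in> E \<and> p = Inl a \<and> q = Inl b) \<or>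
         (\<exists>u v. {u, v} \<in> E \<and> u \<in> V \<and> v \<in> V \<and> {Inr v, Inl u} \<in> S \<and>
             ((p = Inr v \<and> q = Inl u) \<or> (p = Inl u \<and> q = Inr v)))"
proof (cases "{p, q} \<in> type1_edges E")
  case True
  then obtain e where e: "e \<in> E" "{p, q} = Inl ` e" unfolding type1_edges_def by blast
  have "card e = 2" using g e(1) unfolding graph_def by blast
  then obtain a b where ab: "e = {a, b}" unfolding card_2_iff by blast
  then have "{p, q} = {Inl a, Inl b}" using e by simp
  then have "(p = Inl a \<and> q = Inl b) \<or> (p = Inl b \<and> q = Inl a)" by (simp add: doubleton_eq_iff)
  moreover have "{a, b} \<in> E" "{b, a} \<in> E" using e ab by (simp_all add: insert_commute)
  ultimately show ?thesis by blast
next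
  case False
  then have m: "{p, q} \<in> S" using pq by (simp add: sub_edges_def)
  then have "{p, q} \<in> type2_edges V E" using S by (rule subsetD[rotated])
  then obtain u v where uv: "v \<in> V" "{u, v} \<in> E" "{p, q} = {Inr v, Inl u}"
    unfolding type2_edges_def by blast
  have "u \<in> V" using graph_edge[OF g uv(2)] by simp
  moreover have "(p = Inr v \<and> q = Inl u) \<or> (p = Inl u \<and> q = Inr v)" using uv(3) by (simp add: doubleton_eq_iff)
  moreover have "{Inr v, Inl u} \<in> S" using m uv(3) by simp
  ultimately show ?thesis using uv by blast
qed

lemma sub_edges_verts:
  assumes g: "graph V E" and S: "S \<subseteq> type2_edges V E" and pq: "{p, q} \<in> sub_edges E S"
  shows "p \<in> sub_verts V S \<and> q \<in> sub_verts V S"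
  using sub_edges_cases[OF g S pq]
proof (elim disjE exE conjE)
  fix a b assume h: "{a, b} \<in> E" "p = Inl a" "q = Inl b"
  then show ?thesis using graph_edge[OF g h(1)] by (simp add: sub_verts_def)
next
  fix u v assume h: "u \<in> V" "{Inr v, Inl u} \<in> S" "p = Inr v" "q = Inl u"
  have "v \<in> fwd S" using h(2) unfolding fwd_def by blast
  then show ?thesis using h by (simp add: sub_verts_def)
next
  fix u v assume h: "u \<in> V" "{Inr v, Inl u} \<in> S" "p = Inl u" "q = Inr v"
  have "v \<in> fwd S" using h(2) unfolding fwd_def by blast
  then show ?thesis using h by (simp add: sub_verts_def)
qed

lemma comp_U:
  assumes crit: "critical V E n" and n3: "n \<ge> 3" and rn: "r \<le> n" and Mr: "is_Mr V E n r S"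
    and v: "v \<in> fwd S"
  shows "\<exists>c. proper_col (sub_verts V S) (sub_edges E S) n c \<and>
            card (c ` Inr ` (fwd S - {v})) \<le> r - 1 \<and> c (Inr v) \<notin> c ` Inr ` (fwd S - {v})"
proof -
  have g: "graph V E" using crit by (simp add: critical_def)
  have S: "S \<subseteq> type2_edges V E" using Mr by (rule Mr_sub)
  obtain u where eS: "{Inr v, Inl u} \<in> S" using v unfolding fwd_def by blast
  define e where "e = {Inr v, Inl u}"
  have "\<forall>e\<in>S. admits V E n r (S - {e})" using Mr by (simp add: is_Mr_def)
  then have "admits V E n r (S - {e})" using eS by (simp add: e_def)
  then obtain c0 where c0: "proper_col (sub_verts V (S - {e})) (sub_edges E (S - {e})) n c0"
    and c0card: "card (c0 ` Inr ` fwd (S - {e})) \<le> r - 1" unfolding admits_def by blast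
  have "{Inr v, Inl u} \<in> type2_edges V E" using S eS by (rule subsetD)
  then have vu: "v \<in> V \<and> {u, v} \<in> E" by (rule type2_nbr)
  then have vV: "v \<in> V" and uv: "{u, v} \<in> E" by simp_all
  define c where "c = c0(Inr v := c0 (Inl v))"
  have fsub: "fwd S - {v} \<subseteq> fwd (S - {e})"
  proof
    fix w assume w: "w \<in> fwd S - {v}"
    then obtain u' where m: "{Inr w, Inl u'} \<in> S" unfolding fwd_def by blast
    have "{Inr w, Inl u'} \<noteq> e" using w by (simp add: e_def doubleton_eq_iff)
    then have "{Inr w, Inl u'} \<in> S - {e}" using m by simp
    then show "w \<in> fwd (S - {e})" unfolding fwd_def by blast
  qed
  have t1: "c0 (Inl a) \<noteq> c0 (Inl b)" if ab: "{a, b} \<in> E" for a b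
  proof -
    have "{Inl a, Inl b} \<in> sub_edges E (S - {e})" using Inl_type1[OF ab] by (simp add: sub_edges_def)
    then show ?thesis by (rule proper_colD2[OF c0])
  qed
  have pc: "proper_col (sub_verts V S) (sub_edges E S) n c"
    unfolding proper_col_def
  proof (intro conjI allI impI ballI)
    fix x assume x: "x \<in> sub_verts V S"
    show "c x < n"
    proof (cases "x = Inr v")
      case True
      have "Inl v \<in> sub_verts V (S - {e})" using vV by (simp add: sub_verts_def)
      then show ?thesis using proper_colD1[OF c0] True by (simp add: c_def)
    next
      case False
      then have "x \<in> sub_verts V (S - {e})" using x fsub unfolding sub_verts_def by blast
      then show ?thesis using proper_colD1[OF c0] False by (simp add: c_def)
    qed
  next
    fix p q assume pq: "{p, q} \<in> sub_edges E S"
    show "c p \<noteq> c q"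
      using sub_edges_cases[OF g S pq]
    proof (elim disjE exE conjE)
      fix a b assume "{a, b} \<in> E" "p = Inl a" "q = Inl b"
      then show ?thesis using t1 by (simp add: c_def)
    next
      fix u' w assume h: "{u', w} \<in> E" "{Inr w, Inl u'} \<in> S" "p = Inr w" "q = Inl u'"
      show ?thesis
      proof (cases "w = v")
        case True
        have "c0 (Inl u') \<noteq> c0 (Inl v)" using t1 h(1) True by simp
        then show ?thesis using h(3,4) True by (simp add: c_def)
      next
        case False
        then have "{Inr w, Inl u'} \<noteq> e" by (simp add: e_def doubleton_eq_iff)
        then have "{Inr w, Inl u'} \<in> sub_edges E (S - {e})" using h(2) by (simp add: sub_edges_def)
        then have "c0 (Inr w) \<noteq> c0 (Inl u')" by (rule proper_colD2[OF c0])
        then show ?thesis using h(3,4) False by (simp add: c_def)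
      qed
    next
      fix u' w assume h: "{u', w} \<in> E" "{Inr w, Inl u'} \<in> S" "p = Inl u'" "q = Inr w"
      show ?thesis
      proof (cases "w = v")
        case True
        have "c0 (Inl u') \<noteq> c0 (Inl v)" using t1 h(1) True by simp
        then show ?thesis using h(3,4) True by (simp add: c_def)
      next
        case False
        then have "{Inr w, Inl u'} \<noteq> e" by (simp add: e_def doubleton_eq_iff)
        then have "{Inr w, Inl u'} \<in> sub_edges E (S - {e})" using h(2) by (simp add: sub_edges_def)
        then have "c0 (Inr w) \<noteq> c0 (Inl u')" by (rule proper_colD2[OF c0])
        then show ?thesis using h(3,4) False by (simp add: c_def)
      qed
    qed
  qed
  have img: "c ` Inr ` (fwd S - {v}) \<subseteq> c0 ` Inr ` fwd (S - {e})"
  proof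
    fix y assume "y \<in> c ` Inr ` (fwd S - {v})"
    then obtain w where w: "w \<in> fwd S - {v}" "y = c (Inr w)" by blast
    then have "y = c0 (Inr w)" by (simp add: c_def)
    then show "y \<in> c0 ` Inr ` fwd (S - {e})" using w(1) fsub by blast
  qed
  have fin0: "finite (c0 ` Inr ` fwd (S - {e}))"
  proof (rule finite_subset)
    show "c0 ` Inr ` fwd (S - {e}) \<subseteq> {..<n}"
    proof
      fix y assume "y \<in> c0 ` Inr ` fwd (S - {e})"
      then obtain w where w: "w \<in> fwd (S - {e})" "y = c0 (Inr w)" by blast
      then have "Inr w \<in> sub_verts V (S - {e})" by (simp add: sub_verts_def)
      then show "y \<in> {..<n}" using proper_colD1[OF c0] w(2) by simp
    qed
  qed simp
  have cardle: "card (c ` Inr ` (fwd S - {v})) \<le> r - 1"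
    using card_mono[OF fin0 img] c0card by linarith
  have notin: "c (Inr v) \<notin> c ` Inr ` (fwd S - {v})"
  proof
    assume a: "c (Inr v) \<in> c ` Inr ` (fwd S - {v})"
    have "c ` Inr ` fwd S \<subseteq> c ` Inr ` (fwd S - {v})"
    proof
      fix y assume "y \<in> c ` Inr ` fwd S"
      then obtain w where w: "w \<in> fwd S" "y = c (Inr w)" by blast
      show "y \<in> c ` Inr ` (fwd S - {v})"
      proof (cases "w = v")
        case True then show ?thesis using a w(2) by simp
      next
        case False then show ?thesis using w by blast
      qed
    qed
    moreover have "c ` Inr ` (fwd S - {v}) \<subseteq> c ` Inr ` fwd S" by blast
    ultimately have "c ` Inr ` fwd S = c ` Inr ` (fwd S - {v})" by (rule subset_antisym)
    then have "admits V E n r S" using pc cardle unfolding admits_def by metis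
    then show False using Mr_not_admits[OF crit n3 rn Mr] by simp
  qed
  show ?thesis using pc cardle notin by blast
qed

lemma perm_exists:
  assumes H: "H \<subseteq> {..<n}" and b: "\<beta> < n" "\<beta> \<notin> H" and cH: "card H \<le> n - 1 - j" and j: "j < n"
  shows "\<exists>\<pi>. inj_on \<pi> {..<n} \<and> \<pi> ` {..<n} \<subseteq> {..<n} \<and> \<pi> \<beta> = j \<and> (\<forall>h\<in>H. j < \<pi> h)"
proof -
  define B where "B = {j<..<n}"
  have fH: "finite H" using H finite_subset by blast
  have cB: "card B = n - 1 - j" by (simp add: B_def)
  obtain g where g: "g ` H \<subseteq> B" "inj_on g H" using card_le_inj[OF fH _ ] cH cB
    by (metis B_def finite_greaterThanLessThan)
  define R where "R = {..<n} - insert \<beta> H"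
  define R' where "R' = {..<n} - insert j (g ` H)"
  have Bsub: "B \<subseteq> {..<n}" by (auto simp: B_def)
  have jB: "j \<notin> B" by (simp add: B_def)
  have cR: "card R = n - (card H + 1)"
  proof -
    have "insert \<beta> H \<subseteq> {..<n}" using H b by auto
    moreover have "card (insert \<beta> H) = card H + 1" using fH b by simp
    ultimately show ?thesis unfolding R_def by (simp add: card_Diff_subset fH)
  qed
  have cR': "card R' = n - (card H + 1)"
  proof -
    have "insert j (g ` H) \<subseteq> {..<n}" using g(1) Bsub j by auto
    moreover have "j \<notin> g ` H" using g(1) jB by blast
    moreover have "card (g ` H) = card H" using g(2) by (rule card_image)
    ultimately show ?thesis unfolding R'_def using fH by (simp add: card_Diff_subset)
  qed
  obtain h where h: "bij_betw h R R'"
    using finite_same_card_bij[of R R'] cR cR' by (auto simp: R_def R'_def)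
  define \<pi> where "\<pi> x = (if x \<in> H then g x else if x = \<beta> then j else h x)" for x
  have hR: "x \<in> R \<Longrightarrow> h x \<in> R'" for x using h by (auto simp: bij_betw_def)
  have inj: "inj_on \<pi> {..<n}"
  proof (rule inj_onI)
    fix x y assume x: "x \<in> {..<n}" and y: "y \<in> {..<n}" and e: "\<pi> x = \<pi> y"
    show "x = y"
    proof (cases "x \<in> H")
      case xH: True
      show ?thesis
      proof (cases "y \<in> H")
        case True then show ?thesis using xH e g(2) by (auto simp: \<pi>_def inj_on_def)
      next
        case yH: False
        have gx: "g x \<in> B" using g(1) xH by blast
        show ?thesis
        proof (cases "y = \<beta>")
          case True then show ?thesis using xH yH e gx jB by (auto simp: \<pi>_def)
        next
          case False
          then have "y \<in> R" using y yH by (simp add: R_def)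
          then have "h y \<in> R'" by (rule hR)
          then have "h y \<notin> g ` H" by (simp add: R'_def)
          moreover have "g x = h y" using e xH yH False by (simp add: \<pi>_def)
          ultimately show ?thesis using xH by (metis imageI)
        qed
      qed
    next
      case xH: False
      show ?thesis
      proof (cases "x = \<beta>")
        case xb: True
        show ?thesis
        proof (cases "y \<in> H")
          case True
          have "g y \<in> B" using g(1) True by blast
          then show ?thesis using xH xb True e jB by (auto simp: \<pi>_def)
        next
          case yH: False
          show ?thesis
          proof (cases "y = \<beta>")
            case True then show ?thesis using xb by simp
          next
            case False
            then have "y \<in> R" using y yH by (simp add: R_def)
            then have "h y \<in> R'" by (rule hR)
            then show ?thesis using e xH xb yH False by (auto simp: \<pi>_def R'_def)
          qed
        qed
      next
        case xb: False
        then have xR: "x \<in> R" using x xH by (simp add: R_def)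
        then have hx: "h x \<in> R'" by (rule hR)
        show ?thesis
        proof (cases "y \<in> H")
          case True
          have "g y \<in> g ` H" using True by blast
          then show ?thesis using e xH xb True hx by (auto simp: \<pi>_def R'_def)
        next
          case yH: False
          show ?thesis
          proof (cases "y = \<beta>")
            case True then show ?thesis using e xH xb yH hx by (auto simp: \<pi>_def R'_def)
          next
            case False
            then have yR: "y \<in> R" using y yH by (simp add: R_def)
            have "h x = h y" using e xH xb yH False by (simp add: \<pi>_def)
            then show ?thesis using h xR yR by (auto simp: bij_betw_def inj_on_def)
          qed
        qed
      qed
    qed
  qed
  have img: "\<pi> ` {..<n} \<subseteq> {..<n}"
  proof
    fix z assume "z \<in> \<pi> ` {..<n}"
    then obtain x where x: "x < n" "z = \<pi> x" by auto
    show "z \<in> {..<n}"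
    proof (cases "x \<in> H")
      case True then show ?thesis using x g(1) Bsub by (auto simp: \<pi>_def)
    next
      case xH: False
      show ?thesis
      proof (cases "x = \<beta>")
        case True then show ?thesis using x xH j by (simp add: \<pi>_def)
      next
        case False
        then have "x \<in> R" using x xH by (simp add: R_def)
        then have "h x \<in> R'" by (rule hR)
        then show ?thesis using x xH False by (auto simp: \<pi>_def R'_def)
      qed
    qed
  qed
  have "\<pi> \<beta> = j" using b by (simp add: \<pi>_def)
  moreover have "\<forall>x\<in>H. j < \<pi> x" using g(1) by (auto simp: \<pi>_def B_def)
  ultimately show ?thesis using inj img by blast
qed

lemma sub_edges_verts': "graph V E \<Longrightarrow> S \<subseteq> type2_edges V E \<Longrightarrow> {p, q} \<in> sub_edges E S \<Longrightarrow> p \<in> sub_verts V S"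
  using sub_edges_verts by blast

lemma compU_final:
  assumes crit: "critical V E n" and n3: "n \<ge> 3" and jn: "j + 2 \<le> n"
    and Mr: "is_Mr V E n (n - j) S" and v: "v \<in> fwd S"
  shows "\<exists>c. (\<forall>x\<in>sub_verts V S. c x < n) \<and> (\<forall>p q. {p, q} \<in> sub_edges E S \<longrightarrow> c p \<noteq> c q) \<and>
             c (Inr v) = j \<and> (\<forall>w\<in>fwd S. w \<noteq> v \<longrightarrow> j < c (Inr w))"
proof -
  have g: "graph V E" using crit by (simp add: critical_def)
  have S: "S \<subseteq> type2_edges V E" using Mr by (rule Mr_sub)
  obtain c0 where c0: "proper_col (sub_verts V S) (sub_edges E S) n c0"
    and cH: "card (c0 ` Inr ` (fwd S - {v})) \<le> n - j - 1"
    and nb: "c0 (Inr v) \<notin> c0 ` Inr ` (fwd S - {v})"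
    using comp_U[OF crit n3 _ Mr v] by auto
  define H where "H = c0 ` Inr ` (fwd S - {v})"
  have Hs: "H \<subseteq> {..<n}"
  proof
    fix y assume "y \<in> H"
    then obtain w where w: "w \<in> fwd S" "y = c0 (Inr w)" unfolding H_def by blast
    then have "Inr w \<in> sub_verts V S" by (simp add: sub_verts_def)
    then show "y \<in> {..<n}" using proper_colD1[OF c0] w(2) by simp
  qed
  have bn: "c0 (Inr v) < n" using proper_colD1[OF c0] v by (simp add: sub_verts_def)
  obtain \<pi> where \<pi>: "inj_on \<pi> {..<n}" "\<pi> ` {..<n} \<subseteq> {..<n}" "\<pi> (c0 (Inr v)) = j" "\<forall>h\<in>H. j < \<pi> h"
    using perm_exists[OF Hs bn nb[folded H_def], of j] cH jn unfolding H_def by auto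
  define c where "c = \<pi> \<circ> c0"
  have "\<forall>x\<in>sub_verts V S. c x < n"
  proof
    fix x assume "x \<in> sub_verts V S"
    then have "c0 x \<in> {..<n}" using proper_colD1[OF c0] by simp
    then show "c x < n" using \<pi>(2) unfolding c_def by auto
  qed
  moreover have "\<forall>p q. {p, q} \<in> sub_edges E S \<longrightarrow> c p \<noteq> c q"
  proof (intro allI impI)
    fix p q assume pq: "{p, q} \<in> sub_edges E S"
    have pv: "p \<in> sub_verts V S" and qv: "q \<in> sub_verts V S" using sub_edges_verts[OF g S pq] by simp_all
    have "c0 p \<noteq> c0 q" using proper_colD2[OF c0 pq] .
    moreover have "c0 p \<in> {..<n}" "c0 q \<in> {..<n}" using proper_colD1[OF c0] pv qv by simp_all
    ultimately show "c p \<noteq> c q" using \<pi>(1) unfolding c_def by (auto dest: inj_onD)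
  qed
  moreover have "c (Inr v) = j" using \<pi>(3) by (simp add: c_def)
  moreover have "\<forall>w\<in>fwd S. w \<noteq> v \<longrightarrow> j < c (Inr w)"
    using \<pi>(4) unfolding c_def H_def by auto
  ultimately show ?thesis by blast
qed

lemma comp_rem2:
  assumes crit: "critical V E n" and n3: "n \<ge> 3" and rn: "r \<le> n" and r2: "2 \<le> r"
    and Mr: "is_Mr V E n r S" and eS: "e \<in> S"
  shows "\<exists>c. (\<forall>x\<in>sub_verts V S. c x < n) \<and> (\<forall>p q. {p, q} \<in> sub_edges E S - {e} \<longrightarrow> c p \<noteq> c q) \<and>
             card (c ` Inr ` fwd S) \<le> r - 1"
proof -
  have g: "graph V E" using crit by (simp add: critical_def)
  have S: "S \<subseteq> type2_edges V E" using Mr by (rule Mr_sub)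
  have "e \<in> type2_edges V E" using S eS by (rule subsetD)
  then obtain u v where e: "e = {Inr v, Inl u}" unfolding type2_edges_def by blast
  have "\<forall>e\<in>S. admits V E n r (S - {e})" using Mr by (simp add: is_Mr_def)
  then have "admits V E n r (S - {e})" using eS by simp
  then obtain c0 where c0: "proper_col (sub_verts V (S - {e})) (sub_edges E (S - {e})) n c0"
    and c0card: "card (c0 ` Inr ` fwd (S - {e})) \<le> r - 1" unfolding admits_def by blast
  define F where "F = c0 ` Inr ` fwd (S - {e})"
  have S': "S - {e} \<subseteq> type2_edges V E" using S by blast
  have Fs: "F \<subseteq> {..<n}"
  proof
    fix y assume "y \<in> F"
    then obtain w where w: "w \<in> fwd (S - {e})" "y = c0 (Inr w)" unfolding F_def by blast
    then have "Inr w \<in> sub_verts V (S - {e})" by (simp add: sub_verts_def)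
    then show "y \<in> {..<n}" using proper_colD1[OF c0] w(2) by simp
  qed
  have fF: "finite F" using Fs finite_subset by blast
  have esub: "sub_edges E S - {e} \<subseteq> sub_edges E (S - {e})" by (auto simp: sub_edges_def)
  have fsub: "fwd S \<subseteq> insert v (fwd (S - {e}))"
  proof
    fix w assume "w \<in> fwd S"
    then obtain u' where m: "{Inr w, Inl u'} \<in> S" unfolding fwd_def by blast
    show "w \<in> insert v (fwd (S - {e}))"
    proof (cases "{Inr w, Inl u'} = e")
      case True then show ?thesis using e by (simp add: doubleton_eq_iff)
    next
      case False
      then have "{Inr w, Inl u'} \<in> S - {e}" using m by simp
      then show ?thesis unfolding fwd_def by blast
    qed
  qed
  show ?thesis
  proof (cases "v \<in> fwd (S - {e})")
    case True
    then have fs: "fwd S \<subseteq> fwd (S - {e})" using fsub by blast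
    have "\<forall>x\<in>sub_verts V S. c0 x < n"
    proof
      fix x assume "x \<in> sub_verts V S"
      then have "x \<in> sub_verts V (S - {e})" using fs unfolding sub_verts_def by blast
      then show "c0 x < n" using proper_colD1[OF c0] by simp
    qed
    moreover have "\<forall>p q. {p, q} \<in> sub_edges E S - {e} \<longrightarrow> c0 p \<noteq> c0 q"
    proof (intro allI impI)
      fix p q assume "{p, q} \<in> sub_edges E S - {e}"
      then have "{p, q} \<in> sub_edges E (S - {e})" using esub by (rule subsetD[rotated])
      then show "c0 p \<noteq> c0 q" by (rule proper_colD2[OF c0])
    qed
    moreover have "card (c0 ` Inr ` fwd S) \<le> r - 1"
    proof -
      have "c0 ` Inr ` fwd S \<subseteq> F" unfolding F_def using fs by (rule image_mono[OF image_mono])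
      then have "card (c0 ` Inr ` fwd S) \<le> card F" by (rule card_mono[OF fF])
      then show ?thesis using c0card unfolding F_def by linarith
    qed
    ultimately show ?thesis by blast
  next
    case False
    define \<gamma> where "\<gamma> = (if F = {} then 0 else (SOME h. h \<in> F))"
    define c where "c = c0(Inr v := \<gamma>)"
    have \<gamma>n: "\<gamma> < n"
    proof (cases "F = {}")
      case True then show ?thesis using n3 by (simp add: \<gamma>_def)
    next
      case False
      then have "(SOME h. h \<in> F) \<in> F" by (simp add: some_in_eq)
      then show ?thesis using Fs False by (auto simp: \<gamma>_def)
    qed
    have "\<forall>x\<in>sub_verts V S. c x < n"
    proof
      fix x assume x: "x \<in> sub_verts V S"
      show "c x < n"
      proof (cases "x = Inr v")
        case True then show ?thesis using \<gamma>n by (simp add: c_def)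
      next
        case nv: False
        then have "x \<in> sub_verts V (S - {e})" using x fsub unfolding sub_verts_def by blast
        then show ?thesis using proper_colD1[OF c0] nv by (simp add: c_def)
      qed
    qed
    moreover have "\<forall>p q. {p, q} \<in> sub_edges E S - {e} \<longrightarrow> c p \<noteq> c q"
    proof (intro allI impI)
      fix p q assume "{p, q} \<in> sub_edges E S - {e}"
      then have pq: "{p, q} \<in> sub_edges E (S - {e})" using esub by blast
      have pv: "p \<in> sub_verts V (S - {e})" using sub_edges_verts[OF g S' pq] by simp
      have qv: "q \<in> sub_verts V (S - {e})" using sub_edges_verts[OF g S' pq] by simp
      have "p \<noteq> Inr v" using pv False by (auto simp: sub_verts_def)
      moreover have "q \<noteq> Inr v" using qv False by (auto simp: sub_verts_def)
      ultimately show "c p \<noteq> c q" using proper_colD2[OF c0 pq] by (simp add: c_def)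
    qed
    moreover have "card (c ` Inr ` fwd S) \<le> r - 1"
    proof -
      have sub: "c ` Inr ` fwd S \<subseteq> insert \<gamma> F"
      proof
        fix y assume "y \<in> c ` Inr ` fwd S"
        then obtain w where w: "w \<in> fwd S" "y = c (Inr w)" by blast
        show "y \<in> insert \<gamma> F"
        proof (cases "w = v")
          case True then show ?thesis using w by (simp add: c_def)
        next
          case nv: False
          then have "w \<in> fwd (S - {e})" using w(1) fsub by blast
          then show ?thesis using w nv unfolding F_def c_def by simp
        qed
      qed
      have "card (insert \<gamma> F) \<le> r - 1"
      proof (cases "F = {}")
        case True then show ?thesis using r2 by simp
      next
        case nF: False
        then have "(SOME h. h \<in> F) \<in> F" by (simp add: some_in_eq)
        then have "\<gamma> \<in> F" using nF by (simp add: \<gamma>_def)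
        then show ?thesis using c0card by (simp add: insert_absorb F_def)
      qed
      then show ?thesis using card_mono[OF _ sub] fF by (meson finite_insert le_trans)
    qed
    ultimately show ?thesis by blast
  qed
qed

lemma comp2_final:
  assumes crit: "critical V E n" and n3: "n \<ge> 3" and jn: "j + 2 \<le> n"
    and Mr: "is_Mr V E n (n - j) S" and eS: "e \<in> S"
  shows "\<exists>c. (\<forall>x\<in>sub_verts V S. c x < n) \<and> (\<forall>p q. {p, q} \<in> sub_edges E S - {e} \<longrightarrow> c p \<noteq> c q) \<and>
             (\<forall>w\<in>fwd S. j < c (Inr w))"
proof -
  have g: "graph V E" using crit by (simp add: critical_def)
  have S: "S \<subseteq> type2_edges V E" using Mr by (rule Mr_sub)
  have r1: "n - j \<le> n" by simp
  have r2: "2 \<le> n - j" using jn by simp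
  obtain c0 where c0b: "\<forall>x\<in>sub_verts V S. c0 x < n"
    and c0e: "\<forall>p q. {p, q} \<in> sub_edges E S - {e} \<longrightarrow> c0 p \<noteq> c0 q"
    and cH: "card (c0 ` Inr ` fwd S) \<le> n - j - 1"
    using comp_rem2[OF crit n3 r1 r2 Mr eS] by blast
  define H where "H = c0 ` Inr ` fwd S"
  have Hs: "H \<subseteq> {..<n}"
  proof
    fix y assume "y \<in> H"
    then obtain w where w: "w \<in> fwd S" "y = c0 (Inr w)" unfolding H_def by blast
    then have "Inr w \<in> sub_verts V S" by (simp add: sub_verts_def)
    then show "y \<in> {..<n}" using c0b w(2) by simp
  qed
  have "card H < card {..<n}" using cH jn unfolding H_def by simp
  then obtain \<beta> where b: "\<beta> < n" "\<beta> \<notin> H"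
    by (metis Hs card_mono finite_lessThan lessThan_iff not_le subsetI subset_antisym)
  have cH': "card H \<le> n - 1 - j" using cH unfolding H_def by simp
  obtain \<pi> where \<pi>: "inj_on \<pi> {..<n}" "\<pi> ` {..<n} \<subseteq> {..<n}" "\<forall>h\<in>H. j < \<pi> h"
    using perm_exists[OF Hs b cH'] jn by auto
  define c where "c = \<pi> \<circ> c0"
  have "\<forall>x\<in>sub_verts V S. c x < n"
  proof
    fix x assume "x \<in> sub_verts V S"
    then have "c0 x \<in> {..<n}" using c0b by simp
    then show "c x < n" using \<pi>(2) unfolding c_def by auto
  qed
  moreover have "\<forall>p q. {p, q} \<in> sub_edges E S - {e} \<longrightarrow> c p \<noteq> c q"
  proof (intro allI impI)
    fix p q assume pqe: "{p, q} \<in> sub_edges E S - {e}"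
    then have pq: "{p, q} \<in> sub_edges E S" by simp
    have pv: "p \<in> sub_verts V S" and qv: "q \<in> sub_verts V S" using sub_edges_verts[OF g S pq] by simp_all
    have "c0 p \<noteq> c0 q" using c0e pqe by blast
    moreover have "c0 p \<in> {..<n}" "c0 q \<in> {..<n}" using c0b pv qv by simp_all
    ultimately show "c p \<noteq> c q" using \<pi>(1) unfolding c_def by (auto dest: inj_onD)
  qed
  moreover have "\<forall>w\<in>fwd S. j < c (Inr w)"
    using \<pi>(3) unfolding c_def H_def by simp
  ultimately show ?thesis by blast
qed

lemma comp1_final:
  assumes crit: "critical V E n" and n3: "n \<ge> 3" and jn: "j + 2 \<le> n"
    and S: "S \<subseteq> type2_edges V E" and xy: "{x, y} \<in> E"
  shows "\<exists>c. (\<forall>z\<in>sub_verts V S. c z < n) \<and>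
             (\<forall>p q. {p, q} \<in> sub_edges E S - {Inl ` {x, y}} \<longrightarrow> c p \<noteq> c q) \<and>
             (\<forall>w\<in>fwd S. j < c (Inr w))"
proof -
  have g: "graph V E" using crit by (simp add: critical_def)
  obtain \<psi> where \<psi>: "proper_col V (E - {{x, y}}) (n - 1) \<psi>"
    using crit_edge[OF crit xy] unfolding colorable_def by blast
  define c :: "'a + 'a \<Rightarrow> nat" where "c = case_sum \<psi> (\<lambda>_. n - 1)"
  have "\<forall>z\<in>sub_verts V S. c z < n"
  proof
    fix z assume "z \<in> sub_verts V S"
    then have "(\<exists>w\<in>V. z = Inl w) \<or> (\<exists>w. z = Inr w)" unfolding sub_verts_def by blast
    then show "c z < n"
    proof
      assume "\<exists>w\<in>V. z = Inl w"
      then obtain w where w: "w \<in> V" "z = Inl w" by blast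
      then have "\<psi> w < n - 1" using proper_colD1[OF \<psi>] by simp
      then show ?thesis using w by (simp add: c_def)
    next
      assume "\<exists>w. z = Inr w"
      then show ?thesis using n3 by (auto simp: c_def)
    qed
  qed
  moreover have "\<forall>p q. {p, q} \<in> sub_edges E S - {Inl ` {x, y}} \<longrightarrow> c p \<noteq> c q"
  proof (intro allI impI)
    fix p q assume pqe: "{p, q} \<in> sub_edges E S - {Inl ` {x, y}}"
    then have pq: "{p, q} \<in> sub_edges E S" by simp
    show "c p \<noteq> c q"
      using sub_edges_cases[OF g S pq]
    proof (elim disjE exE conjE)
      fix a b assume h: "{a, b} \<in> E" "p = Inl a" "q = Inl b"
      have "{a, b} \<noteq> {x, y}"
      proof
        assume "{a, b} = {x, y}"
        then have "{p, q} = Inl ` {x, y}" using h by auto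
        then show False using pqe by simp
      qed
      then have "{a, b} \<in> E - {{x, y}}" using h(1) by simp
      then show ?thesis using proper_colD2[OF \<psi>] h by (simp add: c_def)
    next
      fix u v assume h: "u \<in> V" "p = Inr v" "q = Inl u"
      then show ?thesis using proper_colD1[OF \<psi> h(1)] by (simp add: c_def)
    next
      fix u v assume h: "u \<in> V" "p = Inl u" "q = Inr v"
      then show ?thesis using proper_colD1[OF \<psi> h(1)] by (simp add: c_def)
    qed
  qed
  moreover have "\<forall>w\<in>fwd S. j < c (Inr w)"
  proof
    fix w show "j < c (Inr w)" using jn by (simp add: c_def)
  qed
  ultimately show ?thesis by blast
qed

lemma sub_edges_pair:
  assumes g: "graph V E" and S: "S \<subseteq> type2_edges V E" and e: "e' \<in> sub_edges E S"
  shows "\<exists>p q. e' = {p, q}"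
proof (cases "e' \<in> type1_edges E")
  case True
  then obtain e where e: "e \<in> E" "e' = Inl ` e" unfolding type1_edges_def by blast
  have "card e = 2" using g e(1) unfolding graph_def by blast
  then obtain a b where ab: "e = {a, b}" unfolding card_2_iff by blast
  then have "e' = {Inl a, Inl b}" using e(2) by simp
  then show ?thesis by blast
next
  case False
  then have "e' \<in> S" using e by (simp add: sub_edges_def)
  then have "e' \<in> type2_edges V E" using S by (rule subsetD[rotated])
  then show ?thesis unfolding type2_edges_def by blast
qed

lemma W_edges_memD:
  assumes "ee \<in> W_edges E t Ss"
  shows "(\<exists>j e'. ee = (\<lambda>x. Inl (j, x)) ` e' \<and> j < t \<and> e' \<in> sub_edges E (Ss j)) \<or>
         (\<exists>j xs. ee = {Inl (j, Inr (xs ! j)), Inr xs} \<and> j < t \<and> xs \<in> active t Ss)"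
  using assms unfolding W_edges_def Un_iff mem_Collect_eq by assumption

lemma W_edge_cases:
  assumes g: "graph V E" and Ss: "\<forall>j<t. Ss j \<subseteq> type2_edges V E"
    and uv: "{u, v} \<in> W_edges E t Ss"
  shows "(\<exists>j p q. j < t \<and> {p, q} \<in> sub_edges E (Ss j) \<and> u = Inl (j, p) \<and> v = Inl (j, q)) \<or>
         (\<exists>j xs. j < t \<and> xs \<in> active t Ss \<and>
            ((u = Inl (j, Inr (xs ! j)) \<and> v = Inr xs) \<or> (u = Inr xs \<and> v = Inl (j, Inr (xs ! j)))))"
proof -
  show ?thesis using W_edges_memD[OF uv]
  proof (elim disjE exE conjE)
    fix j e' assume h: "{u, v} = (\<lambda>x. Inl (j, x)) ` e'" "j < t" "e' \<in> sub_edges E (Ss j)"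
    have Sj: "Ss j \<subseteq> type2_edges V E" using Ss h(2) by simp
    obtain p q where pq: "e' = {p, q}" using sub_edges_pair[OF g Sj h(3)] by blast
    then have "{u, v} = {Inl (j, p), Inl (j, q)}" using h(1) by simp
    then have "(u = Inl (j, p) \<and> v = Inl (j, q)) \<or> (u = Inl (j, q) \<and> v = Inl (j, p))"
      by (simp add: doubleton_eq_iff)
    moreover have "{p, q} \<in> sub_edges E (Ss j)" "{q, p} \<in> sub_edges E (Ss j)"
      using h(3) pq by (simp_all add: insert_commute)
    ultimately show ?thesis using h(2) by blast
  next
    fix j xs assume h: "{u, v} = {Inl (j, Inr (xs ! j)), Inr xs}" "j < t" "xs \<in> active t Ss"
    then have "(u = Inl (j, Inr (xs ! j)) \<and> v = Inr xs) \<or> (u = Inr xs \<and> v = Inl (j, Inr (xs ! j)))"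
      by (simp add: doubleton_eq_iff)
    then show ?thesis using h(2,3) by blast
  qed
qed

lemma W_proper:
  assumes g: "graph V E" and Ss: "\<forall>j<t. Ss j \<subseteq> type2_edges V E"
    and cb: "\<forall>j<t. \<forall>x\<in>sub_verts V (Ss j). cc j x < n"
    and ce: "\<forall>j<t. \<forall>p q. {p, q} \<in> sub_edges E (Ss j) \<longrightarrow> {Inl (j, p), Inl (j, q)} \<notin> X \<longrightarrow> cc j p \<noteq> cc j q"
    and fb: "\<forall>xs\<in>active t Ss. f xs < n"
    and fe: "\<forall>j<t. \<forall>xs\<in>active t Ss. {Inl (j, Inr (xs ! j)), Inr xs} \<notin> X \<longrightarrow> f xs \<noteq> cc j (Inr (xs ! j))"
  shows "proper_col (W_verts V t Ss) (W_edges E t Ss - X) n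
           (\<lambda>z. case z of Inl (j, x) \<Rightarrow> cc j x | Inr xs \<Rightarrow> f xs)"
  unfolding proper_col_def
proof (intro conjI allI impI ballI)
  fix z assume "z \<in> W_verts V t Ss"
  then have "(\<exists>j x. j < t \<and> x \<in> sub_verts V (Ss j) \<and> z = Inl (j, x)) \<or> (\<exists>xs\<in>active t Ss. z = Inr xs)"
    unfolding W_verts_def by blast
  then show "(case z of Inl (j, x) \<Rightarrow> cc j x | Inr xs \<Rightarrow> f xs) < n"
    using cb fb by auto
next
  fix u v assume uvX: "{u, v} \<in> W_edges E t Ss - X"
  then have uv: "{u, v} \<in> W_edges E t Ss" by simp
  show "(case u of Inl (j, x) \<Rightarrow> cc j x | Inr xs \<Rightarrow> f xs) \<noteq> (case v of Inl (j, x) \<Rightarrow> cc j x | Inr xs \<Rightarrow> f xs)"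
    using W_edge_cases[OF g Ss uv]
  proof (elim disjE exE conjE)
    fix j p q assume h: "j < t" "{p, q} \<in> sub_edges E (Ss j)" "u = Inl (j, p)" "v = Inl (j, q)"
    then have "{Inl (j, p), Inl (j, q)} \<notin> X" using uvX by simp
    then have "cc j p \<noteq> cc j q" using ce h(1,2) by blast
    then show ?thesis using h(3,4) by simp
  next
    fix j xs assume h: "j < t" "xs \<in> active t Ss" "u = Inl (j, Inr (xs ! j))" "v = Inr xs"
    then have "{Inl (j, Inr (xs ! j)), Inr xs} \<notin> X" using uvX by simp
    then have "f xs \<noteq> cc j (Inr (xs ! j))" using fe h(1,2) by blast
    then show ?thesis using h(3,4) by simp
  next
    fix j xs assume h: "j < t" "xs \<in> active t Ss" "u = Inr xs" "v = Inl (j, Inr (xs ! j))"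
    then have "{Inl (j, Inr (xs ! j)), Inr xs} \<notin> X" using uvX by (simp add: insert_commute)
    then have "f xs \<noteq> cc j (Inr (xs ! j))" using fe h(1,2) by blast
    then show ?thesis using h(3,4) by simp
  qed
qed

lemma greedy:
  assumes U: "finite U" and F: "\<forall>l<m. card (U - F l) \<le> l" and C: "C \<subseteq> U" "card C = m"
  shows "\<exists>\<sigma>. (\<forall>l<m. \<sigma> l \<in> C \<and> \<sigma> l \<in> F l) \<and> C \<subseteq> \<sigma> ` {..<m}"
  using F C
proof (induction m arbitrary: C)
  case 0
  have "finite C" using 0(2) U finite_subset by blast
  then have "C = {}" using 0(3) by simp
  then show ?case by simp
next
  case (Suc m)
  have fC: "finite C" using Suc.prems(2) U finite_subset by blast
  have cm: "card (U - F m) \<le> m" using Suc.prems(1) by simp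
  have "C \<inter> F m \<noteq> {}"
  proof
    assume "C \<inter> F m = {}"
    then have "C \<subseteq> U - F m" using Suc.prems(2) by blast
    then have "card C \<le> card (U - F m)" using U by (simp add: card_mono)
    then show False using cm Suc.prems(3) by simp
  qed
  then obtain \<gamma> where \<gamma>: "\<gamma> \<in> C" "\<gamma> \<in> F m" by blast
  define C' where "C' = C - {\<gamma>}"
  have "card C' = m" using Suc.prems(3) \<gamma>(1) fC by (simp add: C'_def)
  moreover have "C' \<subseteq> U" using Suc.prems(2) by (auto simp: C'_def)
  moreover have "\<forall>l<m. card (U - F l) \<le> l" using Suc.prems(1) by simp
  ultimately obtain \<sigma> where \<sigma>: "\<forall>l<m. \<sigma> l \<in> C' \<and> \<sigma> l \<in> F l" "C' \<subseteq> \<sigma> ` {..<m}"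
    using Suc.IH by blast
  define \<sigma>' where "\<sigma>' = \<sigma>(m := \<gamma>)"
  have "\<forall>l<Suc m. \<sigma>' l \<in> C \<and> \<sigma>' l \<in> F l"
  proof (intro allI impI)
    fix l assume "l < Suc m"
    then show "\<sigma>' l \<in> C \<and> \<sigma>' l \<in> F l"
      using \<sigma>(1) \<gamma> by (cases "l = m") (auto simp: \<sigma>'_def C'_def)
  qed
  moreover have "C \<subseteq> \<sigma>' ` {..<Suc m}"
  proof
    fix x assume x: "x \<in> C"
    show "x \<in> \<sigma>' ` {..<Suc m}"
    proof (cases "x = \<gamma>")
      case True
      then have "x = \<sigma>' m" by (simp add: \<sigma>'_def)
      then show ?thesis by blast
    next
      case False
      then have "x \<in> C'" using x by (simp add: C'_def)
      then obtain l where l: "l < m" "x = \<sigma> l" using \<sigma>(2) by blast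
      then have "x = \<sigma>' l" by (simp add: \<sigma>'_def)
      then show ?thesis using l(1) by (metis image_eqI lessThan_iff less_SucI)
    qed
  qed
  ultimately show ?case by blast
qed

lemma W_verts_Inl: "j < t \<Longrightarrow> x \<in> sub_verts V (Ss j) \<Longrightarrow> Inl (j, x) \<in> W_verts V t Ss"
  unfolding W_verts_def by blast

lemma W_verts_Inr: "xs \<in> active t Ss \<Longrightarrow> Inr xs \<in> W_verts V t Ss"
  unfolding W_verts_def by blast

lemma W_edges_comp:
  assumes "j < t" "{p, q} \<in> sub_edges E (Ss j)"
  shows "{Inl (j, p), Inl (j, q)} \<in> W_edges E t Ss"
proof -
  have "(\<lambda>x. Inl (j, x)) ` {p, q} \<in> W_edges E t Ss"
    unfolding W_edges_def Un_iff mem_Collect_eq using assms by blast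
  then show ?thesis by simp
qed

lemma W_edges_act: "j < t \<Longrightarrow> xs \<in> active t Ss \<Longrightarrow> {Inl (j, Inr (xs ! j)), Inr xs} \<in> W_edges E t Ss"
  unfolding W_edges_def Un_iff mem_Collect_eq by blast

lemma fwd_nonempty:
  assumes crit: "critical V E n" and n3: "n \<ge> 3" and rn: "r \<le> n" and Mr: "is_Mr V E n r S"
  shows "fwd S \<noteq> {}"
proof
  assume f0: "fwd S = {}"
  have g: "graph V E" using crit by (simp add: critical_def)
  have S: "S \<subseteq> type2_edges V E" using Mr by (rule Mr_sub)
  obtain \<phi> where \<phi>: "proper_col V E n \<phi>" using crit unfolding critical_def colorable_def by blast
  define c :: "'a + 'a \<Rightarrow> nat" where "c = case_sum \<phi> (\<lambda>_. 0)"
  have S0: "\<And>v u. {Inr v, Inl u} \<notin> S" using f0 unfolding fwd_def by blast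
  have "proper_col (sub_verts V S) (sub_edges E S) n c"
    unfolding proper_col_def
  proof (intro conjI allI impI ballI)
    fix x assume "x \<in> sub_verts V S"
    then obtain w where "w \<in> V" "x = Inl w" using f0 unfolding sub_verts_def by blast
    then show "c x < n" using proper_colD1[OF \<phi>] by (simp add: c_def)
  next
    fix p q assume pq: "{p, q} \<in> sub_edges E S"
    show "c p \<noteq> c q" using sub_edges_cases[OF g S pq]
    proof (elim disjE exE conjE)
      fix a b assume "{a, b} \<in> E" "p = Inl a" "q = Inl b"
      then show ?thesis using proper_colD2[OF \<phi>] by (simp add: c_def)
    next
      fix u v assume "{Inr v, Inl u} \<in> S" then show ?thesis using S0 by blast
    next
      fix u v assume "{Inr v, Inl u} \<in> S" then show ?thesis using S0 by blast
    qed
  qed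
  moreover have "card (c ` Inr ` fwd S) \<le> r - 1" using f0 by simp
  ultimately have "admits V E n r S" unfolding admits_def by blast
  then show False using Mr_not_admits[OF crit n3 rn Mr] by simp
qed

lemma scheme_props:
  assumes xs: "xs \<in> active t Ss" and ex: "\<exists>l<t. xs ! l \<noteq> a ! l \<or> l \<in> J"
    and cJ: "\<forall>j<t. j \<in> J \<longrightarrow> (\<forall>v\<in>fwd (Ss j). j < cc j (Inr v))"
    and cU: "\<forall>j<t. j \<notin> J \<longrightarrow> cc j (Inr (a ! j)) = j \<and> (\<forall>v\<in>fwd (Ss j). v \<noteq> a ! j \<longrightarrow> j < cc j (Inr v))"
  shows "(LEAST l. l < t \<and> (xs ! l \<noteq> a ! l \<or> l \<in> J)) < t \<and>
         (\<forall>j<t. (LEAST l. l < t \<and> (xs ! l \<noteq> a ! l \<or> l \<in> J)) \<noteq> cc j (Inr (xs ! j)))"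
proof -
  define P where "P l \<longleftrightarrow> l < t \<and> (xs ! l \<noteq> a ! l \<or> l \<in> J)" for l
  define m where "m = (LEAST l. P l)"
  have Pm: "P m" unfolding m_def using ex LeastI_ex[of P] unfolding P_def by blast
  have mle: "P l \<Longrightarrow> m \<le> l" for l unfolding m_def by (rule Least_le)
  have xf: "j < t \<Longrightarrow> xs ! j \<in> fwd (Ss j)" for j using xs by (simp add: active_def)
  have "\<forall>j<t. m \<noteq> cc j (Inr (xs ! j))"
  proof (intro allI impI)
    fix j assume j: "j < t"
    show "m \<noteq> cc j (Inr (xs ! j))"
    proof (cases "j \<in> J")
      case True
      then have "m \<le> j" using j by (intro mle) (simp add: P_def)
      moreover have "j < cc j (Inr (xs ! j))" using cJ j True xf[OF j] by blast
      ultimately show ?thesis by simp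
    next
      case nJ: False
      show ?thesis
      proof (cases "xs ! j = a ! j")
        case True
        then have "cc j (Inr (xs ! j)) = j" using cU j nJ by simp
        moreover have "m \<noteq> j" using Pm True nJ unfolding P_def by blast
        ultimately show ?thesis by simp
      next
        case False
        then have "m \<le> j" using j by (intro mle) (simp add: P_def)
        moreover have "j < cc j (Inr (xs ! j))" using cU j nJ xf[OF j] False by metis
        ultimately show ?thesis by simp
      qed
    qed
  qed
  then show ?thesis using Pm unfolding m_def P_def by simp
qed

lemma W_lower:
  assumes crit: "critical V E n" and n3: "n \<ge> 3" and tn: "t + 1 \<le> n"
    and Mr: "\<forall>j<t. is_Mr V E n (n - j) (Ss j)"
    and c: "proper_col (W_verts V t Ss) (W_edges E t Ss) n c"
  shows "t + 1 \<le> card (c ` Inr ` active t Ss)"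
proof (rule ccontr)
  assume "\<not> t + 1 \<le> card (c ` Inr ` active t Ss)"
  then have Ct: "card (c ` Inr ` active t Ss) \<le> t" by simp
  define C where "C = c ` Inr ` active t Ss"
  define m where "m = card C"
  define F where "F l = (\<lambda>v. c (Inl (l, Inr v))) ` fwd (Ss l)" for l
  have Fs: "F l \<subseteq> {..<n}" if l: "l < t" for l
  proof
    fix y assume "y \<in> F l"
    then obtain v where v: "v \<in> fwd (Ss l)" "y = c (Inl (l, Inr v))" unfolding F_def by blast
    then have "Inr v \<in> sub_verts V (Ss l)" by (simp add: sub_verts_def)
    then have "Inl (l, Inr v) \<in> W_verts V t Ss" using l by (rule W_verts_Inl[rotated])
    then show "y \<in> {..<n}" using proper_colD1[OF c] v(2) by simp
  qed
  have Fc: "n - l \<le> card (F l)" if l: "l < t" for l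
  proof (rule ccontr)
    assume "\<not> n - l \<le> card (F l)"
    then have cF: "card (F l) \<le> n - l - 1" by simp
    define cl where "cl x = c (Inl (l, x))" for x
    have pc: "proper_col (sub_verts V (Ss l)) (sub_edges E (Ss l)) n cl"
      unfolding proper_col_def
    proof (intro conjI allI impI ballI)
      fix x assume "x \<in> sub_verts V (Ss l)"
      then have "Inl (l, x) \<in> W_verts V t Ss" using l by (rule W_verts_Inl[rotated])
      then show "cl x < n" using proper_colD1[OF c] by (simp add: cl_def)
    next
      fix p q assume "{p, q} \<in> sub_edges E (Ss l)"
      then have "{Inl (l, p), Inl (l, q)} \<in> W_edges E t Ss" using l by (rule W_edges_comp[rotated])
      then show "cl p \<noteq> cl q" using proper_colD2[OF c] by (simp add: cl_def)
    qed
    have img: "cl ` Inr ` fwd (Ss l) = F l" unfolding F_def cl_def by (simp add: image_image)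
    have "admits V E n (n - l) (Ss l)" unfolding admits_def
      using cF by (intro exI[of _ cl]) (simp add: pc img)
    moreover have "is_Mr V E n (n - l) (Ss l)" using Mr l by simp
    ultimately show False using Mr_not_admits[OF crit n3] by simp
  qed
  have Fd: "card ({..<n} - F l) \<le> l" if l: "l < t" for l
  proof -
    have "finite (F l)" using Fs[OF l] finite_subset by blast
    then have "card ({..<n} - F l) = n - card (F l)" using Fs[OF l] by (simp add: card_Diff_subset)
    then show ?thesis using Fc[OF l] by simp
  qed
  have fne: "fwd (Ss l) \<noteq> {}" if l: "l < t" for l
  proof
    assume "fwd (Ss l) = {}"
    then have "F l = {}" by (simp add: F_def)
    then show False using Fc[OF l] l tn by simp
  qed
  have Csub: "C \<subseteq> {..<n}"
  proof
    fix y assume "y \<in> C"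
    then obtain xs where xs: "xs \<in> active t Ss" "y = c (Inr xs)" unfolding C_def by blast
    then have "Inr xs \<in> W_verts V t Ss" by (simp add: W_verts_Inr)
    then show "y \<in> {..<n}" using proper_colD1[OF c] xs(2) by simp
  qed
  have mt: "m \<le> t" using Ct by (simp add: m_def C_def)
  have Fm: "\<forall>l<m. card ({..<n} - F l) \<le> l" using Fd mt by simp
  have cm: "card C = m" by (simp add: m_def)
  obtain \<sigma> where \<sigma>: "\<forall>l<m. \<sigma> l \<in> C \<and> \<sigma> l \<in> F l" "C \<subseteq> \<sigma> ` {..<m}"
    using greedy[OF finite_lessThan Fm Csub cm] by blast
  define pick where "pick l = (if l < m then (SOME v. v \<in> fwd (Ss l) \<and> c (Inl (l, Inr v)) = \<sigma> l)
      else (SOME v. v \<in> fwd (Ss l)))" for l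
  have pick1: "pick l \<in> fwd (Ss l) \<and> c (Inl (l, Inr (pick l))) = \<sigma> l" if l: "l < m" for l
  proof -
    have "\<sigma> l \<in> F l" using \<sigma>(1) l by blast
    then obtain v0 where "\<sigma> l = c (Inl (l, Inr v0))" "v0 \<in> fwd (Ss l)" unfolding F_def by (rule imageE)
    then have "\<exists>v. v \<in> fwd (Ss l) \<and> c (Inl (l, Inr v)) = \<sigma> l" by metis
    from someI_ex[OF this] show ?thesis using l unfolding pick_def by simp
  qed
  have pick2: "pick l \<in> fwd (Ss l)" if l: "l < t" for l
  proof (cases "l < m")
    case True then show ?thesis using pick1 by blast
  next
    case False
    have "\<exists>v. v \<in> fwd (Ss l)" using fne[OF l] by blast
    from someI_ex[OF this] show ?thesis using False unfolding pick_def by simp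
  qed
  define xs where "xs = map pick [0..<t]"
  have xsn: "l < t \<Longrightarrow> xs ! l = pick l" for l by (simp add: xs_def)
  have xsa: "xs \<in> active t Ss" unfolding active_def using pick2 xsn by (simp add: xs_def)
  have "c (Inr xs) \<in> C" using xsa unfolding C_def by blast
  then obtain l where l: "l < m" "c (Inr xs) = \<sigma> l" using \<sigma>(2) by blast
  have lt: "l < t" using l(1) mt by simp
  have "c (Inl (l, Inr (xs ! l))) = \<sigma> l" using pick1[OF l(1)] xsn[OF lt] by simp
  moreover have "{Inl (l, Inr (xs ! l)), Inr xs} \<in> W_edges E t Ss" using lt xsa by (rule W_edges_act)
  then have "c (Inl (l, Inr (xs ! l))) \<noteq> c (Inr xs)" by (rule proper_colD2[OF c])
  ultimately show False using l(2) by simp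
qed

theorem lemma4:
  fixes V :: "'a set" and E :: "'a set set" and k i :: nat
    and Ss :: "nat \<Rightarrow> ('a + 'a) set set"
  assumes "k \<ge> 4"
    and "critical V E (k - 1)"
    and "triangle_free E"
    and "pentagon_free E"
    and "1 \<le> i" and "i \<le> k - 1"
    and "\<forall>j < i - 1. is_Mr V E (k - 1) (k - 1 - j) (Ss j)"
  shows "(\<forall>a \<in> active (i - 1) Ss. \<exists>c.
            proper_col (W_verts V (i - 1) Ss) (W_edges E (i - 1) Ss) (k - 1) c \<and>
            c ` Inr ` active (i - 1) Ss \<subseteq> {..<i} \<and>
            {x \<in> active (i - 1) Ss. c (Inr x) = i - 1} = {a})
       \<and> (\<forall>c. proper_col (W_verts V (i - 1) Ss) (W_edges E (i - 1) Ss) (k - 1) c \<longrightarrow>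
            card (c ` Inr ` active (i - 1) Ss) \<ge> i)
       \<and> (\<forall>e \<in> W_edges E (i - 1) Ss. \<exists>c.
            proper_col (W_verts V (i - 1) Ss) (W_edges E (i - 1) Ss - {e}) (k - 1) c \<and>
            card (c ` Inr ` active (i - 1) Ss) \<le> i - 1)"
proof -
  obtain n where n: "n = k - 1" by blast
  obtain t where t: "t = i - 1" by blast
  have n3: "n \<ge> 3" using assms(1) n by simp
  have crit: "critical V E n" using assms(2) n by simp
  have g: "graph V E" using crit by (simp add: critical_def)
  have it: "i = t + 1" using assms(5) t by simp
  have tn: "t + 1 \<le> n" using assms(5,6) t n by simp
  have Mr: "\<forall>j<t. is_Mr V E n (n - j) (Ss j)" using assms(7) n t by simp
  have Ssub: "\<forall>j<t. Ss j \<subseteq> type2_edges V E" using Mr Mr_sub by blast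
  have jn: "j + 2 \<le> n" if "j < t" for j using that tn by simp
  have fne: "fwd (Ss j) \<noteq> {}" if j: "j < t" for j
  proof -
    have "is_Mr V E n (n - j) (Ss j)" using Mr j by simp
    then show ?thesis using fwd_nonempty[OF crit n3, of "n - j" "Ss j"] by simp
  qed
  have actne: "\<exists>a. a \<in> active t Ss"
  proof -
    define a where "a = map (\<lambda>l. SOME v. v \<in> fwd (Ss l)) [0..<t]"
    have "a ! j \<in> fwd (Ss j)" if j: "j < t" for j
    proof -
      have "\<exists>v. v \<in> fwd (Ss j)" using fne[OF j] by blast
      from someI_ex[OF this] show ?thesis using j by (simp add: a_def)
    qed
    then have "a \<in> active t Ss" unfolding active_def by (simp add: a_def)
    then show ?thesis by blast
  qed
  have afwd: "xs ! j \<in> fwd (Ss j)" if "xs \<in> active t Ss" "j < t" for xs j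
    using that by (simp add: active_def)
  have adiff: "\<exists>l<t. xs ! l \<noteq> a ! l" if "xs \<in> active t Ss" "a \<in> active t Ss" "xs \<noteq> a" for xs a
  proof (rule ccontr)
    assume "\<not> (\<exists>l<t. xs ! l \<noteq> a ! l)"
    moreover have "length xs = t" "length a = t" using that by (simp_all add: active_def)
    ultimately have "xs = a" by (simp add: nth_equalityI)
    then show False using that(3) by simp
  qed
  have U: "\<exists>cc. \<forall>j<t. (\<forall>x\<in>sub_verts V (Ss j). cc j x < n) \<and>
              (\<forall>p q. {p, q} \<in> sub_edges E (Ss j) \<longrightarrow> cc j p \<noteq> cc j q) \<and>
              cc j (Inr (a ! j)) = j \<and> (\<forall>w\<in>fwd (Ss j). w \<noteq> a ! j \<longrightarrow> j < cc j (Inr w))"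
    if a: "a \<in> active t Ss" for a
  proof -
    have "\<forall>j. \<exists>c. j < t \<longrightarrow> ((\<forall>x\<in>sub_verts V (Ss j). c x < n) \<and>
              (\<forall>p q. {p, q} \<in> sub_edges E (Ss j) \<longrightarrow> c p \<noteq> c q) \<and>
              c (Inr (a ! j)) = j \<and> (\<forall>w\<in>fwd (Ss j). w \<noteq> a ! j \<longrightarrow> j < c (Inr w)))"
    proof
      fix j
      show "\<exists>c. j < t \<longrightarrow> ((\<forall>x\<in>sub_verts V (Ss j). c x < n) \<and>
              (\<forall>p q. {p, q} \<in> sub_edges E (Ss j) \<longrightarrow> c p \<noteq> c q) \<and>
              c (Inr (a ! j)) = j \<and> (\<forall>w\<in>fwd (Ss j). w \<noteq> a ! j \<longrightarrow> j < c (Inr w)))"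
      proof (cases "j < t")
        case True
        have "is_Mr V E n (n - j) (Ss j)" using Mr True by simp
        from compU_final[OF crit n3 jn[OF True] this afwd[OF a True]] show ?thesis by blast
      next
        case False then show ?thesis by blast
      qed
    qed
    from choice[OF this] show ?thesis by blast
  qed
  define Col where "Col cc f = (\<lambda>z. case z of Inl (j, x) \<Rightarrow> cc j x | Inr xs \<Rightarrow> f xs)"
    for cc :: "nat \<Rightarrow> 'a + 'a \<Rightarrow> nat" and f :: "'a list \<Rightarrow> nat"
  have ColInr: "Col cc f (Inr xs) = f xs" for cc f xs by (simp add: Col_def)
  have cardt: "card (Col cc f ` Inr ` active t Ss) \<le> t" if "\<forall>xs\<in>active t Ss. f xs < t" for cc f
  proof -
    have "Col cc f ` Inr ` active t Ss \<subseteq> {..<t}" using that by (auto simp: ColInr)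
    then have "card (Col cc f ` Inr ` active t Ss) \<le> card {..<t}" by (rule card_mono[OF finite_lessThan])
    then show ?thesis by simp
  qed
  have P1: "\<forall>a \<in> active t Ss. \<exists>c. proper_col (W_verts V t Ss) (W_edges E t Ss) n c \<and>
            c ` Inr ` active t Ss \<subseteq> {..<i} \<and> {x \<in> active t Ss. c (Inr x) = t} = {a}"
  proof
    fix a assume a: "a \<in> active t Ss"
    obtain cc where cc: "\<forall>j<t. (\<forall>x\<in>sub_verts V (Ss j). cc j x < n) \<and>
              (\<forall>p q. {p, q} \<in> sub_edges E (Ss j) \<longrightarrow> cc j p \<noteq> cc j q) \<and>
              cc j (Inr (a ! j)) = j \<and> (\<forall>w\<in>fwd (Ss j). w \<noteq> a ! j \<longrightarrow> j < cc j (Inr w))"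
      using U[OF a] by blast
    define f where "f xs = (if xs = a then t else (LEAST l. l < t \<and> (xs ! l \<noteq> a ! l \<or> l \<in> {})))" for xs
    have cJ: "\<forall>j<t. j \<in> {} \<longrightarrow> (\<forall>v\<in>fwd (Ss j). j < cc j (Inr v))" by simp
    have cU: "\<forall>j<t. j \<notin> {} \<longrightarrow> cc j (Inr (a ! j)) = j \<and> (\<forall>v\<in>fwd (Ss j). v \<noteq> a ! j \<longrightarrow> j < cc j (Inr v))"
      using cc by simp
    have sch: "f xs < t \<and> (\<forall>j<t. f xs \<noteq> cc j (Inr (xs ! j)))" if xs: "xs \<in> active t Ss" "xs \<noteq> a" for xs
    proof -
      have "\<exists>l<t. xs ! l \<noteq> a ! l \<or> l \<in> {}" using adiff[OF xs(1) a xs(2)] by simp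
      from scheme_props[OF xs(1) this cJ cU] show ?thesis using xs(2) by (simp add: f_def)
    qed
    have pc: "proper_col (W_verts V t Ss) (W_edges E t Ss - {}) n (Col cc f)"
      unfolding Col_def
    proof (rule W_proper[OF g Ssub])
      show "\<forall>j<t. \<forall>x\<in>sub_verts V (Ss j). cc j x < n" using cc by simp
      show "\<forall>j<t. \<forall>p q. {p, q} \<in> sub_edges E (Ss j) \<longrightarrow> {Inl (j, p), Inl (j, q)} \<notin> {} \<longrightarrow> cc j p \<noteq> cc j q"
        using cc by simp
      show "\<forall>xs\<in>active t Ss. f xs < n"
      proof
        fix xs assume xs: "xs \<in> active t Ss"
        show "f xs < n"
        proof (cases "xs = a")
          case True then show ?thesis using tn by (simp add: f_def)
        next
          case False then show ?thesis using sch[OF xs False] tn by simp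
        qed
      qed
      show "\<forall>j<t. \<forall>xs\<in>active t Ss. {Inl (j, Inr (xs ! j)), Inr xs} \<notin> {} \<longrightarrow> f xs \<noteq> cc j (Inr (xs ! j))"
      proof (intro allI impI ballI)
        fix j xs assume j: "j < t" and xs: "xs \<in> active t Ss"
        show "f xs \<noteq> cc j (Inr (xs ! j))"
        proof (cases "xs = a")
          case True then show ?thesis using cc j by (simp add: f_def)
        next
          case False then show ?thesis using sch[OF xs False] j by simp
        qed
      qed
    qed
    have img: "Col cc f ` Inr ` active t Ss \<subseteq> {..<i}"
    proof
      fix y assume "y \<in> Col cc f ` Inr ` active t Ss"
      then obtain xs where xs: "xs \<in> active t Ss" "y = f xs" by (auto simp: ColInr)
      show "y \<in> {..<i}"
      proof (cases "xs = a")
        case True then show ?thesis using xs it by (simp add: f_def)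
      next
        case False then show ?thesis using sch[OF xs(1) False] xs it by simp
      qed
    qed
    have uniq: "{x \<in> active t Ss. Col cc f (Inr x) = t} = {a}"
    proof
      show "{x \<in> active t Ss. Col cc f (Inr x) = t} \<subseteq> {a}"
      proof
        fix x assume x: "x \<in> {x \<in> active t Ss. Col cc f (Inr x) = t}"
        show "x \<in> {a}"
        proof (rule ccontr)
          assume "x \<notin> {a}"
          then have "x \<noteq> a" by simp
          then show False using sch[of x] x by (simp add: ColInr)
        qed
      qed
      show "{a} \<subseteq> {x \<in> active t Ss. Col cc f (Inr x) = t}" using a by (simp add: ColInr f_def)
    qed
    show "\<exists>c. proper_col (W_verts V t Ss) (W_edges E t Ss) n c \<and>
            c ` Inr ` active t Ss \<subseteq> {..<i} \<and> {x \<in> active t Ss. c (Inr x) = t} = {a}"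
      using pc img uniq by auto
  qed
  have P2: "\<forall>c. proper_col (W_verts V t Ss) (W_edges E t Ss) n c \<longrightarrow> card (c ` Inr ` active t Ss) \<ge> i"
    using W_lower[OF crit n3 tn Mr] it by simp
  have P3: "\<forall>e \<in> W_edges E t Ss. \<exists>c. proper_col (W_verts V t Ss) (W_edges E t Ss - {e}) n c \<and>
            card (c ` Inr ` active t Ss) \<le> t"
  proof
    fix e assume e: "e \<in> W_edges E t Ss"
    show "\<exists>c. proper_col (W_verts V t Ss) (W_edges E t Ss - {e}) n c \<and> card (c ` Inr ` active t Ss) \<le> t"
      using W_edges_memD[OF e]
    proof (elim disjE exE conjE)
      fix j0 e' assume ee: "e = (\<lambda>x. Inl (j0, x)) ` e'" and j0: "j0 < t" and e': "e' \<in> sub_edges E (Ss j0)"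
      obtain a where a: "a \<in> active t Ss" using actne by blast
      obtain cc where cc: "\<forall>j<t. (\<forall>x\<in>sub_verts V (Ss j). cc j x < n) \<and>
              (\<forall>p q. {p, q} \<in> sub_edges E (Ss j) \<longrightarrow> cc j p \<noteq> cc j q) \<and>
              cc j (Inr (a ! j)) = j \<and> (\<forall>w\<in>fwd (Ss j). w \<noteq> a ! j \<longrightarrow> j < cc j (Inr w))"
        using U[OF a] by blast
      have Mj0: "is_Mr V E n (n - j0) (Ss j0)" using Mr j0 by simp
      have "\<exists>c. (\<forall>x\<in>sub_verts V (Ss j0). c x < n) \<and>
                (\<forall>p q. {p, q} \<in> sub_edges E (Ss j0) - {e'} \<longrightarrow> c p \<noteq> c q) \<and>
                (\<forall>w\<in>fwd (Ss j0). j0 < c (Inr w))"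
      proof (cases "e' \<in> type1_edges E")
        case True
        then obtain e'' where e'': "e'' \<in> E" "e' = Inl ` e''" unfolding type1_edges_def by blast
        have "card e'' = 2" using g e''(1) unfolding graph_def by blast
        then obtain x y where xy: "e'' = {x, y}" unfolding card_2_iff by blast
        have Sj0: "Ss j0 \<subseteq> type2_edges V E" using Ssub j0 by simp
        show ?thesis using comp1_final[OF crit n3 jn[OF j0] Sj0, of x y] e'' xy by simp
      next
        case False
        then have "e' \<in> Ss j0" using e' by (simp add: sub_edges_def)
        then show ?thesis using comp2_final[OF crit n3 jn[OF j0] Mj0] by blast
      qed
      then obtain c0 where c0b: "\<forall>x\<in>sub_verts V (Ss j0). c0 x < n"
        and c0e: "\<forall>p q. {p, q} \<in> sub_edges E (Ss j0) - {e'} \<longrightarrow> c0 p \<noteq> c0 q"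
        and c0f: "\<forall>w\<in>fwd (Ss j0). j0 < c0 (Inr w)" by blast
      define cc' where "cc' j = (if j = j0 then c0 else cc j)" for j
      define f where "f xs = (LEAST l. l < t \<and> (xs ! l \<noteq> a ! l \<or> l \<in> {j0}))" for xs
      have cJ: "\<forall>j<t. j \<in> {j0} \<longrightarrow> (\<forall>v\<in>fwd (Ss j). j < cc' j (Inr v))" using c0f by (simp add: cc'_def)
      have cU: "\<forall>j<t. j \<notin> {j0} \<longrightarrow> cc' j (Inr (a ! j)) = j \<and> (\<forall>v\<in>fwd (Ss j). v \<noteq> a ! j \<longrightarrow> j < cc' j (Inr v))"
        using cc by (simp add: cc'_def)
      have sch: "f xs < t \<and> (\<forall>j<t. f xs \<noteq> cc' j (Inr (xs ! j)))" if xs: "xs \<in> active t Ss" for xs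
      proof -
        have "\<exists>l<t. xs ! l \<noteq> a ! l \<or> l \<in> {j0}" using j0 by blast
        from scheme_props[OF xs this cJ cU] show ?thesis by (simp add: f_def)
      qed
      have pc: "proper_col (W_verts V t Ss) (W_edges E t Ss - {e}) n (Col cc' f)"
        unfolding Col_def
      proof (rule W_proper[OF g Ssub])
        show "\<forall>j<t. \<forall>x\<in>sub_verts V (Ss j). cc' j x < n" using cc c0b by (simp add: cc'_def)
        show "\<forall>j<t. \<forall>p q. {p, q} \<in> sub_edges E (Ss j) \<longrightarrow> {Inl (j, p), Inl (j, q)} \<notin> {e} \<longrightarrow> cc' j p \<noteq> cc' j q"
        proof (intro allI impI)
          fix j p q assume j: "j < t" and pq: "{p, q} \<in> sub_edges E (Ss j)" and ne: "{Inl (j, p), Inl (j, q)} \<notin> {e}"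
          show "cc' j p \<noteq> cc' j q"
          proof (cases "j = j0")
            case True
            have "{p, q} \<noteq> e'"
            proof
              assume "{p, q} = e'"
              then have "{Inl (j, p), Inl (j, q)} = e" using ee True by auto
              then show False using ne by simp
            qed
            then show ?thesis using c0e pq True by (simp add: cc'_def)
          next
            case False then show ?thesis using cc j pq by (simp add: cc'_def)
          qed
        qed
        show "\<forall>xs\<in>active t Ss. f xs < n" using sch tn by fastforce
        show "\<forall>j<t. \<forall>xs\<in>active t Ss. {Inl (j, Inr (xs ! j)), Inr xs} \<notin> {e} \<longrightarrow> f xs \<noteq> cc' j (Inr (xs ! j))"
          using sch by blast
      qed
      moreover have "card (Col cc' f ` Inr ` active t Ss) \<le> t" using sch by (intro cardt) blast
      ultimately show ?thesis by blast
    next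
      fix j0 b assume ee: "e = {Inl (j0, Inr (b ! j0)), Inr b}" and j0: "j0 < t" and b: "b \<in> active t Ss"
      obtain cc where cc: "\<forall>j<t. (\<forall>x\<in>sub_verts V (Ss j). cc j x < n) \<and>
              (\<forall>p q. {p, q} \<in> sub_edges E (Ss j) \<longrightarrow> cc j p \<noteq> cc j q) \<and>
              cc j (Inr (b ! j)) = j \<and> (\<forall>w\<in>fwd (Ss j). w \<noteq> b ! j \<longrightarrow> j < cc j (Inr w))"
        using U[OF b] by blast
      define f where "f xs = (if xs = b then j0 else (LEAST l. l < t \<and> (xs ! l \<noteq> b ! l \<or> l \<in> {})))" for xs
      have cJ: "\<forall>j<t. j \<in> {} \<longrightarrow> (\<forall>v\<in>fwd (Ss j). j < cc j (Inr v))" by simp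
      have cU: "\<forall>j<t. j \<notin> {} \<longrightarrow> cc j (Inr (b ! j)) = j \<and> (\<forall>v\<in>fwd (Ss j). v \<noteq> b ! j \<longrightarrow> j < cc j (Inr v))"
        using cc by simp
      have sch: "f xs < t \<and> (\<forall>j<t. f xs \<noteq> cc j (Inr (xs ! j)))" if xs: "xs \<in> active t Ss" "xs \<noteq> b" for xs
      proof -
        have "\<exists>l<t. xs ! l \<noteq> b ! l \<or> l \<in> {}" using adiff[OF xs(1) b xs(2)] by simp
        from scheme_props[OF xs(1) this cJ cU] show ?thesis using xs(2) by (simp add: f_def)
      qed
      have flt: "f xs < t" if xs: "xs \<in> active t Ss" for xs
      proof (cases "xs = b")
        case True then show ?thesis using j0 by (simp add: f_def)
      next
        case False then show ?thesis using sch[OF xs False] by simp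
      qed
      have pc: "proper_col (W_verts V t Ss) (W_edges E t Ss - {e}) n (Col cc f)"
        unfolding Col_def
      proof (rule W_proper[OF g Ssub])
        show "\<forall>j<t. \<forall>x\<in>sub_verts V (Ss j). cc j x < n" using cc by simp
        show "\<forall>j<t. \<forall>p q. {p, q} \<in> sub_edges E (Ss j) \<longrightarrow> {Inl (j, p), Inl (j, q)} \<notin> {e} \<longrightarrow> cc j p \<noteq> cc j q"
          using cc by simp
        show "\<forall>xs\<in>active t Ss. f xs < n" using flt tn by fastforce
        show "\<forall>j<t. \<forall>xs\<in>active t Ss. {Inl (j, Inr (xs ! j)), Inr xs} \<notin> {e} \<longrightarrow> f xs \<noteq> cc j (Inr (xs ! j))"
        proof (intro allI impI ballI)
          fix j xs assume j: "j < t" and xs: "xs \<in> active t Ss" and ne: "{Inl (j, Inr (xs ! j)), Inr xs} \<notin> {e}"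
          show "f xs \<noteq> cc j (Inr (xs ! j))"
          proof (cases "xs = b")
            case True
            then have "j \<noteq> j0" using ne ee by auto
            then show ?thesis using cc j True by (simp add: f_def)
          next
            case False then show ?thesis using sch[OF xs False] j by simp
          qed
        qed
      qed
      moreover have "card (Col cc f ` Inr ` active t Ss) \<le> t" using flt by (intro cardt) blast
      ultimately show ?thesis by blast
    qed
  qed
  show ?thesis using P1 P2 P3 unfolding n[symmetric] t[symmetric] by blast
qed

end
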